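(* Let $A,B\in\mathrm{SL}_2\mathbb{Z}_{\ge0}$ be noncommuting, well oriented, with $\mathrm{tr}(A)<\mathrm{tr}(B)$ and $\mathrm{tr}(AB)=\mathrm{tr}(B^2)$. Fix a (possibly empty) word $w$ and an integer $s\ge0$. Then: (1) $[wab(ab^2)^sab^4]<[wab^2(ab^2)^sab^3]$; (2) $[wab^4(ab^2)^sab]<[wab^3(ab^2)^sab^2]$, provided $w$ is empty or begins with $a$.
   Context: Words are finite strings over $\{a,b\}$; $\phi$ is the monoid homomorphism with $\phi(a)=A,\phi(b)=B$, and $[w]=\mathrm{tr}(\phi(w))$. Fixed points are for the Möbius action on $\partial\mathcal{H}=\mathbb{P}^1\mathbb{R}$; $\alpha^\pm$ ($\beta^\pm$) are the attracting/repelling fixed points of $A$ ($B$), both equal to the unique fixed point if parabolic. With $\partial\mathcal{H}$ cyclically ordered and $[\alpha,\beta]$ the closed counterclockwise interval from $\alpha$ to $\beta$, let $I^+=\{\alpha^+\}$ if $\alpha^+=\beta^+$, and otherwise the one of $[\alpha^+,\beta^+],[\beta^+,\alpha^+]$ mapped into itself by both $A$ and $B$ (if it exists); define $I^-$ likewise with $A^{-1},B^{-1},\alpha^-,\beta^-$. The pair is coherently oriented if both exist, and well oriented if $A,B$ is coherently oriented but $A,B^{-1}$ is not. *)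

theory Defs
  imports "HOL-Analysis.Analysis"
begin

text \<open>2x2 integer matrices are \<open>int^2^2\<close>; entry \<open>M$i$j\<close> is row i, column j.\<close>

definition SL2_nonneg :: "int^2^2 \<Rightarrow> bool" where
  "SL2_nonneg M \<longleftrightarrow> det M = 1 \<and> (\<forall>i j. M$i$j \<ge> 0)"

text \<open>Inverse of a determinant-one 2x2 matrix.\<close>
definition inv2 :: "int^2^2 \<Rightarrow> int^2^2" where
  "inv2 M = (\<chi> i j. if i = 1 \<and> j = 1 then M$2$2 else if i = 2 \<and> j = 2 then M$1$1
                     else - M$i$j)"

text \<open>Boundary of the upper half plane: \<open>\<real> \<union> {\<infinity>}\<close>.\<close>
datatype bdry = Fin real | Inf

fun mob :: "int^2^2 \<Rightarrow> bdry \<Rightarrow> bdry" where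
  "mob M (Fin x) = (let den = of_int (M$2$1) * x + of_int (M$2$2) in
     if den = 0 then Inf else Fin ((of_int (M$1$1) * x + of_int (M$1$2)) / den))"
| "mob M Inf = (if M$2$1 = 0 then Inf else Fin (of_int (M$1$1) / of_int (M$2$1)))"

text \<open>Linear action on \<open>\<real>\<^sup>2\<close> and the boundary point (line) spanned by a nonzero vector:
  \<open>(x,y) \<mapsto> x/y\<close>.\<close>
definition linact :: "int^2^2 \<Rightarrow> real \<times> real \<Rightarrow> real \<times> real" where
  "linact M v = (of_int (M$1$1) * fst v + of_int (M$1$2) * snd v,
                 of_int (M$2$1) * fst v + of_int (M$2$2) * snd v)"

definition pt :: "real \<times> real \<Rightarrow> bdry" where
  "pt v = (if snd v = 0 then Inf else Fin (fst v / snd v))"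

definition is_eigen :: "int^2^2 \<Rightarrow> real \<Rightarrow> real \<times> real \<Rightarrow> bool" where
  "is_eigen M l v \<longleftrightarrow> v \<noteq> (0,0) \<and> linact M v = (l * fst v, l * snd v)"

text \<open>Attracting fixed point: eigenline of the eigenvalue of largest modulus;
  repelling: of smallest modulus. For parabolic matrices both are the unique fixed point.\<close>
definition attr :: "int^2^2 \<Rightarrow> bdry" where
  "attr M = (THE z. \<exists>l v. is_eigen M l v \<and> z = pt v \<and>
                      (\<forall>m w. is_eigen M m w \<longrightarrow> \<bar>m\<bar> \<le> \<bar>l\<bar>))"

definition repl :: "int^2^2 \<Rightarrow> bdry" where
  "repl M = (THE z. \<exists>l v. is_eigen M l v \<and> z = pt v \<and>
                      (\<forall>m w. is_eigen M m w \<longrightarrow> \<bar>l\<bar> \<le> \<bar>m\<bar>))"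

text \<open>Closed counterclockwise interval from the first to the second point
  (counterclockwise = increasing real part, passing through \<open>\<infinity>\<close> after \<open>+\<infinity>\<close>).\<close>
fun ccw :: "bdry \<Rightarrow> bdry \<Rightarrow> bdry set" where
  "ccw (Fin x) (Fin y) = (if x \<le> y then {Fin z | z. x \<le> z \<and> z \<le> y}
      else {Fin z | z. x \<le> z} \<union> {Inf} \<union> {Fin z | z. z \<le> y})"
| "ccw (Fin x) Inf = {Fin z | z. x \<le> z} \<union> {Inf}"
| "ccw Inf (Fin y) = {Inf} \<union> {Fin z | z. z \<le> y}"
| "ccw Inf Inf = {Inf}"

definition inv_interval_exists :: "int^2^2 \<Rightarrow> int^2^2 \<Rightarrow> bdry \<Rightarrow> bdry \<Rightarrow> bool" where
  "inv_interval_exists M N x y \<longleftrightarrow> x = y \<or>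
     (\<exists>I \<in> {ccw x y, ccw y x}. mob M ` I \<subseteq> I \<and> mob N ` I \<subseteq> I)"

definition coherently_oriented :: "int^2^2 \<Rightarrow> int^2^2 \<Rightarrow> bool" where
  "coherently_oriented A B \<longleftrightarrow>
     inv_interval_exists A B (attr A) (attr B) \<and>
     inv_interval_exists (inv2 A) (inv2 B) (repl A) (repl B)"

definition well_oriented :: "int^2^2 \<Rightarrow> int^2^2 \<Rightarrow> bool" where
  "well_oriented A B \<longleftrightarrow> coherently_oriented A B \<and> \<not> coherently_oriented A (inv2 B)"

datatype letter = ltr_a | ltr_b

definition phi :: "int^2^2 \<Rightarrow> int^2^2 \<Rightarrow> letter list \<Rightarrow> int^2^2" where
  "phi A B w = foldr (\<lambda>l M. (case l of ltr_a \<Rightarrow> A | ltr_b \<Rightarrow> B) ** M) w (mat 1)"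

definition trw :: "int^2^2 \<Rightarrow> int^2^2 \<Rightarrow> letter list \<Rightarrow> int" where
  "trw A B w = trace (phi A B w)"

end

theory Submission
  imports Defs
begin

lemma mm2: "((X::int^2^2) ** Y) $ i $ j = X$i$1 * Y$1$j + X$i$2 * Y$2$j"
  by (simp add: matrix_matrix_mult_def sum_2)

lemma eq2: "(X::int^2^2) = Y \<longleftrightarrow> X$1$1 = Y$1$1 \<and> X$1$2 = Y$1$2 \<and> X$2$1 = Y$2$1 \<and> X$2$2 = Y$2$2"
  by (auto simp: vec_eq_iff forall_2)

lemma tr2: "trace (X::int^2^2) = X$1$1 + X$2$2"
  by (simp add: trace_def sum_2)

lemma mat1_nth: "(mat 1 :: int^2^2) $ i $ j = (if i = j then 1 else 0)"
  by (simp add: mat_def)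

definition sm :: "int \<Rightarrow> int^2^2 \<Rightarrow> int^2^2" where
  "sm k M = (\<chi> i j. k * M$i$j)"

lemma sm_nth[simp]: "sm k M $ i $ j = k * M$i$j"
  by (simp add: sm_def)

lemma sm_left: "sm k X ** Y = sm k (X ** Y)"
  unfolding eq2 by (simp add: mm2 algebra_simps)

lemma sm_right: "X ** sm k Y = sm k (X ** Y)"
  unfolding eq2 by (simp add: mm2 algebra_simps)

lemma sub_ldistrib: "(X::int^2^2) ** ((Y::int^2^2) - Z) = X ** Y - X ** Z"
  unfolding eq2 by (simp add: mm2 algebra_simps)

lemma sub_rdistrib: "((Y::int^2^2) - Z) ** (X::int^2^2) = Y ** X - Z ** X"
  unfolding eq2 by (simp add: mm2 algebra_simps)

lemma trace_sm: "trace (sm k X) = k * trace X"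
  by (simp add: tr2 algebra_simps)

lemma trace_comm: "trace ((X::int^2^2) ** Y) = trace (Y ** X)"
  by (simp add: tr2 mm2 algebra_simps)

lemma CH:
  assumes "det (M::int^2^2) = 1"
  shows "M ** M = sm (trace M) M - mat 1"
  using assms unfolding eq2 by (simp add: mm2 tr2 det_2 mat1_nth algebra_simps)

lemma bKb:
  fixes A B :: "int^2^2"
  assumes "det B = 1"
  shows "B ** (A ** B - B ** A) ** B = A ** B - B ** A"
  using assms unfolding eq2 by (simp add: mm2 det_2; algebra)

lemma bKb':
  fixes A B :: "int^2^2"
  assumes "det B = 1"
  shows "B ** (B ** A - A ** B) ** B = B ** A - A ** B"
  using assms unfolding eq2 by (simp add: mm2 det_2; algebra)

lemma Mform:
  fixes A B :: "int^2^2"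
  assumes "det A = 1" "det B = 1"
  shows "A ** (B ** A - A ** B) ** B = sm (trace (A ** B) - trace A * trace B) (A ** B)
     + sm (trace A) A + sm (trace B) B - sm 2 (mat 1)"
  using assms unfolding eq2 by (simp add: mm2 det_2 tr2 mat1_nth; algebra)

lemma Lform:
  fixes A B :: "int^2^2"
  assumes "det A = 1" "det B = 1"
  shows "B ** (A ** B - B ** A) ** A = sm (trace (A ** B) - trace A * trace B) (B ** A)
     + sm (trace A) A + sm (trace B) B - sm 2 (mat 1)"
  using assms unfolding eq2 by (simp add: mm2 det_2 tr2 mat1_nth; algebra)

definition good :: "int^2^2 \<Rightarrow> bool" where
  "good M \<longleftrightarrow> M$1$1 \<ge> 1 \<and> M$1$2 \<ge> 0 \<and> M$2$1 \<ge> 0 \<and> M$2$2 \<ge> 1"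

lemma one_le_mult: "(a::int) \<ge> 1 \<Longrightarrow> b \<ge> 1 \<Longrightarrow> a * b \<ge> 1"
  using mult_mono[of 1 a 1 b] by simp

lemma good_mul: assumes "good X" "good Y" shows "good (X ** Y)"
proof -
  have a: "X$1$1 * Y$1$1 \<ge> 1" "X$2$2 * Y$2$2 \<ge> 1"
    using assms by (auto simp: good_def one_le_mult)
  have b: "X$1$2 * Y$2$1 \<ge> 0" "X$2$1 * Y$1$2 \<ge> 0" "X$1$1 * Y$1$2 \<ge> 0" "X$1$2 * Y$2$2 \<ge> 0"
     "X$2$1 * Y$1$1 \<ge> 0" "X$2$2 * Y$2$1 \<ge> 0"
    using assms by (auto simp: good_def)
  show ?thesis unfolding good_def mm2 using a b by linarith
qed

lemma good_I: "good (mat 1)"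
  by (simp add: good_def mat1_nth)

lemma SL_good: assumes "SL2_nonneg M" shows "good M"
proof -
  have d: "M$1$1 * M$2$2 = 1 + M$1$2 * M$2$1" and nn: "\<And>i j. M$i$j \<ge> 0"
    using assms by (auto simp: SL2_nonneg_def det_2)
  have "M$1$2 * M$2$1 \<ge> 0" using nn by simp
  hence "M$1$1 \<noteq> 0" "M$2$2 \<noteq> 0" using d by auto
  thus ?thesis using nn unfolding good_def
    by (metis int_one_le_iff_zero_less order_le_less)
qed

lemma trace_good: "good W \<Longrightarrow> good N \<Longrightarrow> trace (W ** N) \<ge> 2"
proof -
  assume "good W" "good N"
  hence "W$1$1 * N$1$1 \<ge> 1" "W$2$2 * N$2$2 \<ge> 1" "W$1$2 * N$2$1 \<ge> 0" "W$2$1 * N$1$2 \<ge> 0"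
    by (auto simp: good_def one_le_mult)
  thus ?thesis by (simp add: tr2 mm2)
qed

lemma good_lin:
  assumes "good X" "good A" "good B" "c \<ge> 0" "x \<ge> 2" "y \<ge> 2"
  shows "good (sm c X + sm x A + sm y B - sm 2 (mat 1))"
proof -
  have g: "X$1$1 \<ge> 1" "X$1$2 \<ge> 0" "X$2$1 \<ge> 0" "X$2$2 \<ge> 1"
     "A$1$1 \<ge> 1" "A$1$2 \<ge> 0" "A$2$1 \<ge> 0" "A$2$2 \<ge> 1"
     "B$1$1 \<ge> 1" "B$1$2 \<ge> 0" "B$2$1 \<ge> 0" "B$2$2 \<ge> 1"
    using assms by (auto simp: good_def)
  have "c * X$1$1 \<ge> 0" "c * X$1$2 \<ge> 0" "c * X$2$1 \<ge> 0" "c * X$2$2 \<ge> 0"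
       "x * A$1$2 \<ge> 0" "x * A$2$1 \<ge> 0" "y * B$1$2 \<ge> 0" "y * B$2$1 \<ge> 0"
    using g assms by auto
  moreover have "x * A$1$1 \<ge> 2" "x * A$2$2 \<ge> 2" "y * B$1$1 \<ge> 2" "y * B$2$2 \<ge> 2"
    using g assms mult_mono[of 2 x 1 "A$1$1"] mult_mono[of 2 x 1 "A$2$2"]
      mult_mono[of 2 y 1 "B$1$1"] mult_mono[of 2 y 1 "B$2$2"] by auto
  ultimately show ?thesis
    unfolding good_def by (simp add: mat1_nth)
qed

lemma phi_Nil[simp]: "phi A B [] = mat 1" by (simp add: phi_def)
lemma phi_Cons[simp]: "phi A B (l # xs) = (case l of ltr_a \<Rightarrow> A | ltr_b \<Rightarrow> B) ** phi A B xs"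
  by (simp add: phi_def)
lemma phi_append: "phi A B (xs @ ys) = phi A B xs ** phi A B ys"
  by (induction xs) (auto simp: matrix_mul_assoc)

lemma phi_good: "good A \<Longrightarrow> good B \<Longrightarrow> good (phi A B w)"
  by (induction w) (auto simp: good_I good_mul split: letter.splits)

fun mp :: "int^2^2 \<Rightarrow> nat \<Rightarrow> int^2^2" where
  "mp Q 0 = mat 1" | "mp Q (Suc n) = Q ** mp Q n"

lemma phi_rep: "phi A B (concat (replicate s [ltr_a, ltr_b, ltr_b])) = mp (A ** B ** B) s"
  by (induction s) (auto simp: phi_append matrix_mul_assoc)

lemma pow_decomp:
  assumes "det Q = 1" "trace Q \<ge> 2"
  shows "\<exists>p p'. mp Q n ** Q = sm p Q - sm p' (mat 1) \<and> p \<ge> 1 \<and> p' \<le> p"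
proof (induction n)
  case 0
  have "Q = sm 1 Q - sm 0 (mat 1)" unfolding eq2 by simp
  thus ?case by (intro exI[of _ 1] exI[of _ 0]) simp
next
  case (Suc n)
  then obtain p p' where h: "mp Q n ** Q = sm p Q - sm p' (mat 1)" "p \<ge> 1" "p' \<le> p" by blast
  have "mp Q (Suc n) ** Q = Q ** (mp Q n ** Q)" by (simp add: matrix_mul_assoc)
  also have "\<dots> = sm p (Q ** Q) - sm p' Q" by (simp add: h sub_ldistrib sm_right)
  also have "\<dots> = sm (trace Q * p - p') Q - sm p (mat 1)"
    unfolding CH[OF assms(1)] eq2 by (simp add: algebra_simps mat1_nth)
  finally have e: "mp Q (Suc n) ** Q = sm (trace Q * p - p') Q - sm p (mat 1)" .
  have "trace Q * p \<ge> 2 * p" using assms(2) h(2) by (simp add: mult_right_mono)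
  hence "trace Q * p - p' \<ge> 1" "p \<le> trace Q * p - p'" using h by linarith+
  thus ?case using e by blast
qed

theorem lemma6p2:
  fixes A B :: "int^2^2" and w :: "letter list" and s :: nat
  assumes "SL2_nonneg A" and "SL2_nonneg B"
    and "A ** B \<noteq> B ** A"
    and "well_oriented A B"
    and "trace A < trace B"
    and "trace (A ** B) = trace (B ** B)"
  shows "(trw A B (w @ [ltr_a, ltr_b] @ concat (replicate s [ltr_a, ltr_b, ltr_b])
                   @ [ltr_a, ltr_b, ltr_b, ltr_b, ltr_b])
         < trw A B (w @ [ltr_a, ltr_b, ltr_b] @ concat (replicate s [ltr_a, ltr_b, ltr_b])
                   @ [ltr_a, ltr_b, ltr_b, ltr_b]))
       \<and> ((w = [] \<or> hd w = ltr_a) \<longrightarrow>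
         trw A B (w @ [ltr_a, ltr_b, ltr_b, ltr_b, ltr_b] @ concat (replicate s [ltr_a, ltr_b, ltr_b])
                   @ [ltr_a, ltr_b])
         < trw A B (w @ [ltr_a, ltr_b, ltr_b, ltr_b] @ concat (replicate s [ltr_a, ltr_b, ltr_b])
                   @ [ltr_a, ltr_b, ltr_b]))"
proof -
  have dA: "det A = 1" and dB: "det B = 1" using assms(1,2) by (auto simp: SL2_nonneg_def)
  have gA: "good A" and gB: "good B" using assms(1,2) SL_good by auto
  define x where "x = trace A"
  define y where "y = trace B"
  have x2: "x \<ge> 2" using gA by (simp add: x_def tr2 good_def)
  have yx: "y \<ge> x + 1" using assms(5) by (simp add: x_def y_def)
  have trBB: "trace (B ** B) = y * y - 2"
    by (simp add: CH[OF dB] trace_sub trace_sm tr2 mat1_nth y_def algebra_simps)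
  have "y * (y - x) \<ge> y * 1" using yx x2 by (intro mult_left_mono) auto
  hence c0: "trace (A ** B) - x * y \<ge> 0" using assms(6) trBB yx x2 by (simp add: algebra_simps)
  define M where "M = A ** (B ** A - A ** B) ** B"
  define L where "L = B ** (A ** B - B ** A) ** A"
  have gM: "good M" unfolding M_def Mform[OF dA dB]
    using good_lin[OF good_mul[OF gA gB] gA gB c0[unfolded x_def y_def]] x2 yx
    by (simp add: x_def y_def)
  have gL: "good L" unfolding L_def Lform[OF dA dB]
    using good_lin[OF good_mul[OF gB gA] gA gB c0[unfolded x_def y_def]] x2 yx
    by (simp add: x_def y_def)
  define Q where "Q = A ** B ** B"
  have dQ: "det Q = 1" by (simp add: Q_def det_mul dA dB)
  have gQ: "good Q" by (simp add: Q_def good_mul gA gB)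
  have tQ: "trace Q \<ge> 2" using gQ by (simp add: tr2 good_def)
  define W where "W = phi A B w"
  have gW: "good W" unfolding W_def by (rule phi_good[OF gA gB])
  define P where "P = mp Q s"
  define R where "R = P ** Q"
  obtain p p' where hR: "R = sm p Q - sm p' (mat 1)" and p1: "p \<ge> 1"
    using pow_decomp[OF dQ tQ, of s] unfolding R_def P_def by blast
  have e1: "trw A B (w @ [ltr_a, ltr_b] @ concat (replicate s [ltr_a, ltr_b, ltr_b])
                   @ [ltr_a, ltr_b, ltr_b, ltr_b, ltr_b]) = trace (W ** A ** B ** R ** B ** B)"
    by (simp add: trw_def phi_append phi_rep R_def P_def Q_def W_def matrix_mul_assoc)
  have e2: "trw A B (w @ [ltr_a, ltr_b, ltr_b] @ concat (replicate s [ltr_a, ltr_b, ltr_b])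
                   @ [ltr_a, ltr_b, ltr_b, ltr_b]) = trace (W ** A ** B ** B ** R ** B)"
    by (simp add: trw_def phi_append phi_rep R_def P_def Q_def W_def matrix_mul_assoc)
  have k1: "M ** B = A ** B ** B ** Q ** B - A ** B ** Q ** B ** B"
  proof -
    have "M ** B = A ** (B ** (B ** A - A ** B) ** B) ** B ** B"
      unfolding bKb'[OF dB] M_def by simp
    thus ?thesis by (simp add: sub_ldistrib sub_rdistrib matrix_mul_assoc Q_def)
  qed
  have d1: "trace (W ** A ** B ** B ** R ** B) - trace (W ** A ** B ** R ** B ** B)
      = p * trace (W ** (M ** B))"
    unfolding hR k1
    by (simp add: sub_ldistrib sub_rdistrib sm_left sm_right matrix_mul_assoc trace_sub trace_sm
        algebra_simps)
  have "trace (W ** (M ** B)) \<ge> 2" by (rule trace_good[OF gW good_mul[OF gM gB]])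
  hence part1: "trace (W ** A ** B ** R ** B ** B) < trace (W ** A ** B ** B ** R ** B)"
    using d1 p1 mult_mono[of 1 p 2 "trace (W ** (M ** B))"] by linarith
  define Bi where "Bi = sm y (mat 1) - B"
  have BBi: "B ** Bi = mat 1"
    unfolding Bi_def sub_ldistrib sm_right CH[OF dB] by (simp add: y_def)
  have BBi': "X ** B ** Bi = X" for X
    by (simp add: matrix_mul_assoc[symmetric] BBi)
  have e3: "trw A B (w @ [ltr_a, ltr_b, ltr_b, ltr_b, ltr_b] @ concat (replicate s [ltr_a, ltr_b, ltr_b])
                   @ [ltr_a, ltr_b]) = trace (W ** A ** B ** B ** B ** B ** R ** Bi)"
    by (simp add: trw_def phi_append phi_rep R_def P_def Q_def W_def matrix_mul_assoc BBi')
  have e4: "trw A B (w @ [ltr_a, ltr_b, ltr_b, ltr_b] @ concat (replicate s [ltr_a, ltr_b, ltr_b])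
                   @ [ltr_a, ltr_b, ltr_b]) = trace (W ** A ** B ** B ** B ** R)"
    by (simp add: trw_def phi_append phi_rep R_def P_def Q_def W_def matrix_mul_assoc)
  define X where "X = A ** B ** B ** (A ** B - B ** A)"
  have k2: "X = A ** B ** B ** B ** A ** B ** B - A ** B ** B ** B ** B ** A ** B"
  proof -
    have "X = A ** B ** B ** (B ** (A ** B - B ** A) ** B)"
      unfolding bKb[OF dB] X_def by simp
    thus ?thesis by (simp add: sub_ldistrib sub_rdistrib matrix_mul_assoc)
  qed
  have d2: "trace (W ** A ** B ** B ** B ** R) - trace (W ** A ** B ** B ** B ** B ** R ** Bi)
      = p * trace (W ** X)"
    unfolding hR k2 Q_def
    by (simp add: sub_ldistrib sub_rdistrib sm_left sm_right matrix_mul_assoc trace_sub trace_sm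
        BBi' algebra_simps)
  have part2: "trace (W ** X) \<ge> 2" if "w = [] \<or> hd w = ltr_a"
  proof (cases w)
    case Nil
    hence "W = mat 1" by (simp add: W_def)
    hence "trace (W ** X) = trace ((A ** B) ** (B ** (A ** B - B ** A)))"
      by (simp add: X_def matrix_mul_assoc)
    also have "\<dots> = trace (B ** (A ** B - B ** A) ** (A ** B))" by (rule trace_comm)
    also have "\<dots> = trace (L ** B)" by (simp add: L_def matrix_mul_assoc)
    finally show ?thesis using trace_good[OF gL gB] by simp
  next
    case (Cons l w')
    hence "l = ltr_a" using that by simp
    hence "W = A ** phi A B w'" using Cons by (simp add: W_def)
    hence "trace (W ** X) = trace (A ** (phi A B w' ** X))" by (simp add: matrix_mul_assoc)
    also have "\<dots> = trace (phi A B w' ** X ** A)" by (rule trace_comm)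
    also have "\<dots> = trace (phi A B w' ** (A ** B ** L))" by (simp add: X_def L_def matrix_mul_assoc)
    finally show ?thesis using trace_good[OF phi_good[OF gA gB] good_mul[OF good_mul[OF gA gB] gL]]
      by simp
  qed
  show ?thesis
  proof (intro conjI impI)
    show "trw A B (w @ [ltr_a, ltr_b] @ concat (replicate s [ltr_a, ltr_b, ltr_b])
                   @ [ltr_a, ltr_b, ltr_b, ltr_b, ltr_b])
         < trw A B (w @ [ltr_a, ltr_b, ltr_b] @ concat (replicate s [ltr_a, ltr_b, ltr_b])
                   @ [ltr_a, ltr_b, ltr_b, ltr_b])" unfolding e1 e2 by (rule part1)
  next
    assume h: "w = [] \<or> hd w = ltr_a"
    have "trace (W ** X) \<ge> 2" by (rule part2[OF h])
    hence "trace (W ** A ** B ** B ** B ** B ** R ** Bi) < trace (W ** A ** B ** B ** B ** R)"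
      using d2 p1 mult_mono[of 1 p 2 "trace (W ** X)"] by linarith
    thus "trw A B (w @ [ltr_a, ltr_b, ltr_b, ltr_b, ltr_b] @ concat (replicate s [ltr_a, ltr_b, ltr_b])
                   @ [ltr_a, ltr_b])
         < trw A B (w @ [ltr_a, ltr_b, ltr_b, ltr_b] @ concat (replicate s [ltr_a, ltr_b, ltr_b])
                   @ [ltr_a, ltr_b, ltr_b])" unfolding e3 e4 .
  qed
qed

end
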